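(* Let $0<r\le1$, $0<s,w<1$ and $0\le\rho,\delta\le1$. Let $a\in S^m_{\rho,\delta,0,2}(\mathbb{T}\times\mathbb{Z})$. If $m<-\frac1r-w-2\delta$, then $T_a:\Lambda^s(\mathbb{T})\to\Lambda^w(\mathbb{T})$ is an $r$-nuclear operator.
   Context: $\widehat f(\xi)=\int_{\mathbb{T}}e^{-i2\pi x\xi}f(x)dx$, $\langle\xi\rangle=(1+|\xi|^2)^{1/2}$. $S^m_{\rho,\delta,0,2}(\mathbb{T}\times\mathbb{Z})$: functions $a(x,\xi)$ smooth in $x\in\mathbb{T}$ for each $\xi\in\mathbb{Z}$ with $|\partial_x^\beta a(x,\xi)|\le C_\beta\langle\xi\rangle^{m+\delta\beta}$ for $0\le\beta\le2$. $T_au(x)=\sum_{\xi\in\mathbb{Z}}e^{i2\pi x\xi}a(x,\xi)\widehat u(\xi)$. For $0<s<1$, $\Lambda^s(\mathbb{T})$ is the Hölder space with norm $\|f\|_{\Lambda^s}=\sup_{x,h\in\mathbb{T}}|f(x+h)-f(x)||h|^{-s}+\sup_{x\in\mathbb{T}}|f(x)|$ (identified in the paper with the Besov space $B^s_{\infty,\infty}(\mathbb{T})$). $T:E\to F$ is $r$-nuclear if $T=\sum_ne'_n(\cdot)y_n$ with $e'_n\in E'$, $y_n\in F$, $\sum_n\|e'_n\|^r_{E'}\|y_n\|^r_F<\infty$. *)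

theory Defs
  imports "HOL-Analysis.Analysis"
begin

text \<open>The torus T = R/Z: functions on T are 1-periodic functions real => complex.\<close>

definition periodic1 :: "(real \<Rightarrow> 'a) \<Rightarrow> bool" where
  "periodic1 f \<longleftrightarrow> (\<forall>x. f (x + 1) = f x)"

text \<open>Distance of h to 0 on the torus, i.e. |h| for the representative in [-1/2,1/2].\<close>
definition tabs :: "real \<Rightarrow> real" where
  "tabs h = \<bar>h - of_int (round h)\<bar>"

definition japanese :: "int \<Rightarrow> real" where
  "japanese \<xi> = sqrt (1 + (real_of_int \<xi>)\<^sup>2)"

definition fourier_coeff :: "(real \<Rightarrow> complex) \<Rightarrow> int \<Rightarrow> complex" where
  "fourier_coeff f \<xi> = integral {0..1} (\<lambda>x. exp (- \<i> * 2 * pi * of_real x * of_int \<xi>) * f x)"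

definition holder_quots :: "real \<Rightarrow> (real \<Rightarrow> complex) \<Rightarrow> real set" where
  "holder_quots s f = {norm (f (x + h) - f x) / (tabs h) powr s | x h. h \<notin> \<int>}"

definition holder_space :: "real \<Rightarrow> (real \<Rightarrow> complex) set" where
  "holder_space s = {f. periodic1 f \<and> bounded (range f) \<and> bdd_above (holder_quots s f)}"

definition holder_norm :: "real \<Rightarrow> (real \<Rightarrow> complex) \<Rightarrow> real" where
  "holder_norm s f = Sup (holder_quots s f) + Sup (range (\<lambda>x. norm (f x)))"

definition cont_functional :: "real \<Rightarrow> ((real \<Rightarrow> complex) \<Rightarrow> complex) \<Rightarrow> bool" where
  "cont_functional s \<phi> \<longleftrightarrow>
     (\<forall>f\<in>holder_space s. \<forall>g\<in>holder_space s. \<phi> (\<lambda>x. f x + g x) = \<phi> f + \<phi> g) \<and>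
     (\<forall>f\<in>holder_space s. \<forall>c. \<phi> (\<lambda>x. c * f x) = c * \<phi> f) \<and>
     (\<exists>C. \<forall>f\<in>holder_space s. norm (\<phi> f) \<le> C * holder_norm s f)"

definition dual_norm :: "real \<Rightarrow> ((real \<Rightarrow> complex) \<Rightarrow> complex) \<Rightarrow> real" where
  "dual_norm s \<phi> = Sup {norm (\<phi> f) | f. f \<in> holder_space s \<and> holder_norm s f \<le> 1}"

definition r_nuclear :: "real \<Rightarrow> real \<Rightarrow> real \<Rightarrow> ((real \<Rightarrow> complex) \<Rightarrow> (real \<Rightarrow> complex)) \<Rightarrow> bool" where
  "r_nuclear r s w T \<longleftrightarrow>
     (\<forall>u\<in>holder_space s. T u \<in> holder_space w) \<and>
     (\<exists>e :: nat \<Rightarrow> (real \<Rightarrow> complex) \<Rightarrow> complex. \<exists>y :: nat \<Rightarrow> real \<Rightarrow> complex.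
        (\<forall>n. cont_functional s (e n)) \<and> (\<forall>n. y n \<in> holder_space w) \<and>
        summable (\<lambda>n. (dual_norm s (e n)) powr r * (holder_norm w (y n)) powr r) \<and>
        (\<forall>u\<in>holder_space s.
           (\<lambda>N. holder_norm w (\<lambda>x. T u x - (\<Sum>n<N. e n u * y n x))) \<longlonglongrightarrow> 0))"

definition symbol_class :: "real \<Rightarrow> real \<Rightarrow> real \<Rightarrow> (real \<Rightarrow> int \<Rightarrow> complex) \<Rightarrow> bool" where
  "symbol_class m \<rho> \<delta> a \<longleftrightarrow>
     (\<forall>\<xi>. periodic1 (\<lambda>x. a x \<xi>)) \<and>
     (\<exists>D :: nat \<Rightarrow> real \<Rightarrow> int \<Rightarrow> complex. D 0 = a \<and>
        (\<forall>k x \<xi>. ((\<lambda>t. D k t \<xi>) has_vector_derivative D (Suc k) x \<xi>) (at x)) \<and>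
        (\<forall>\<beta>\<le>2. \<exists>C. \<forall>x \<xi>. norm (D \<beta> x \<xi>) \<le> C * japanese \<xi> powr (m + \<delta> * real \<beta>)))"

definition pseudo_op :: "(real \<Rightarrow> int \<Rightarrow> complex) \<Rightarrow> (real \<Rightarrow> complex) \<Rightarrow> real \<Rightarrow> complex" where
  "pseudo_op a u x = (\<Sum>\<^sub>\<infinity>\<xi>::int. exp (\<i> * 2 * pi * of_real x * of_int \<xi>) * a x \<xi> * fourier_coeff u \<xi>)"

end

theory Submission
  imports Defs "HOL-Library.Nat_Bijection"
begin

lemma tabs_nonneg: "0 \<le> tabs h" by (simp add: tabs_def)

lemma tabs_le_half: "tabs h \<le> 1/2"
  unfolding tabs_def using of_int_round_abs_le[of h] by linarith

lemma tabs_pos: "h \<notin> \<int> \<Longrightarrow> 0 < tabs h"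
  unfolding tabs_def
proof -
  assume "h \<notin> \<int>"
  then have "h - of_int (round h) \<noteq> 0" by (metis Ints_of_int eq_iff_diff_eq_0)
  then show "0 < \<bar>h - of_int (round h)\<bar>" by simp
qed

lemma tabs_le_abs: "tabs h \<le> \<bar>h\<bar>"
proof (cases "\<bar>h\<bar> < 1/2")
  case True
  then have "round h = 0" by (intro round_unique') auto
  then show ?thesis by (simp add: tabs_def)
next
  case False then show ?thesis using tabs_le_half[of h] by linarith
qed

lemma periodic1_int: assumes "periodic1 f" shows "f (x + of_int k) = f x"
proof -
  have pos: "f (x + real n) = f x" for x n
  proof (induction n arbitrary: x)
    case (Suc n)
    have "f (x + real (Suc n)) = f ((x + real n) + 1)" by (simp add: algebra_simps)
    also have "\<dots> = f (x + real n)" using assms by (simp add: periodic1_def)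
    finally show ?case using Suc by simp
  qed simp
  show ?thesis
  proof (cases "k \<ge> 0")
    case True then show ?thesis using pos[of x "nat k"] by simp
  next
    case False
    then have "f x = f ((x + of_int k) + real (nat (-k)))" by simp
    then show ?thesis using pos[of "x + of_int k" "nat (-k)"] by simp
  qed
qed

lemma periodic1_tabs:
  assumes "periodic1 f"
  obtains h' where "\<bar>h'\<bar> = tabs h" "\<And>x. f (x + h) = f (x + h')"
proof
  show "\<bar>h - of_int (round h)\<bar> = tabs h" by (simp add: tabs_def)
  fix x
  have "f (x + h) = f ((x + (h - of_int (round h))) + of_int (round h))" by simp
  also have "\<dots> = f (x + (h - of_int (round h)))" by (rule periodic1_int[OF assms])
  finally show "f (x + h) = f (x + (h - of_int (round h)))" .
qed

lemma holder_quots_ne: "holder_quots s f \<noteq> {}"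
proof -
  have "(1/2::real) \<notin> \<int>"
  proof
    assume "(1/2::real) \<in> \<int>"
    then obtain k where "(1/2::real) = of_int k" by (auto elim: Ints_cases)
    then have "1 = 2 * k" by linarith
    then show False by presburger
  qed
  then show ?thesis unfolding holder_quots_def by blast
qed

lemma holder_basic:
  assumes per: "periodic1 f" and A: "\<And>x. norm (f x) \<le> A"
    and B: "\<And>x h. norm (f (x + h) - f x) \<le> B * tabs h powr w"
  shows "f \<in> holder_space w" "holder_norm w f \<le> B + A"
proof -
  have q: "q \<le> B" if "q \<in> holder_quots w f" for q
  proof -
    from that obtain x h where q: "q = norm (f (x + h) - f x) / tabs h powr w" "h \<notin> \<int>"
      unfolding holder_quots_def by blast
    have "0 < tabs h powr w" using tabs_pos[OF q(2)] by simp
    then show ?thesis using B[of x h] q(1) by (simp add: divide_le_eq)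
  qed
  have bq: "bdd_above (holder_quots w f)" using q by (auto simp: bdd_above_def)
  have br: "bounded (range f)" using A by (auto simp: bounded_iff)
  show "f \<in> holder_space w" using per bq br by (simp add: holder_space_def)
  have "Sup (holder_quots w f) \<le> B" using q holder_quots_ne by (intro cSup_least) auto
  moreover have "Sup (range (\<lambda>x. norm (f x))) \<le> A" using A by (intro cSup_least) auto
  ultimately show "holder_norm w f \<le> B + A" by (simp add: holder_norm_def)
qed

lemma holder_props:
  assumes "f \<in> holder_space w"
  shows "\<And>x. norm (f x) \<le> Sup (range (\<lambda>x. norm (f x)))"
    and "\<And>x h. h \<notin> \<int> \<Longrightarrow> norm (f (x + h) - f x) \<le> Sup (holder_quots w f) * tabs h powr w"
    and "0 \<le> Sup (holder_quots w f)" "0 \<le> Sup (range (\<lambda>x. norm (f x)))"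
    and "0 \<le> holder_norm w f" "\<And>x. norm (f x) \<le> holder_norm w f"
proof -
  from assms have bq: "bdd_above (holder_quots w f)" and br: "bounded (range f)"
    by (auto simp: holder_space_def)
  have bn: "bdd_above (range (\<lambda>x. norm (f x)))"
    using br unfolding bounded_iff bdd_above_def by auto
  show n: "norm (f x) \<le> Sup (range (\<lambda>x. norm (f x)))" for x
    using bn by (intro cSup_upper) auto
  show qq: "norm (f (x + h) - f x) \<le> Sup (holder_quots w f) * tabs h powr w" if "h \<notin> \<int>" for x h
  proof -
    have "norm (f (x + h) - f x) / tabs h powr w \<in> holder_quots w f"
      using that unfolding holder_quots_def by blast
    then have "norm (f (x + h) - f x) / tabs h powr w \<le> Sup (holder_quots w f)"
      using bq by (intro cSup_upper)
    moreover have "0 < tabs h powr w" using tabs_pos[OF that] by simp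
    ultimately show ?thesis by (simp add: divide_le_eq)
  qed
  show q0: "0 \<le> Sup (holder_quots w f)"
  proof -
    obtain q where "q \<in> holder_quots w f" using holder_quots_ne by blast
    moreover then have "0 \<le> q" unfolding holder_quots_def by auto
    ultimately show ?thesis using bq by (meson cSup_upper order_trans)
  qed
  show n0: "0 \<le> Sup (range (\<lambda>x. norm (f x)))" using n[of 0] norm_ge_zero order_trans by blast
  show "0 \<le> holder_norm w f" using q0 n0 by (simp add: holder_norm_def)
  show "norm (f x) \<le> holder_norm w f" for x using q0 n[of x] by (simp add: holder_norm_def)
qed

lemma holder_continuous:
  assumes f: "f \<in> holder_space s" and s: "0 < s"
  shows "continuous_on UNIV f"
proof -
  define Q where "Q = Sup (holder_quots s f)"
  have Q0: "0 \<le> Q" using holder_props(3)[OF f] by (simp add: Q_def)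
  have "isCont f x" for x
  proof -
    have ev: "\<forall>\<^sub>F y in at x. norm (f y - f x) \<le> Q * \<bar>y - x\<bar> powr s"
      unfolding eventually_at
    proof (intro exI[of _ 1] conjI ballI impI)
      fix y assume y: "y \<noteq> x \<and> dist y x < 1"
      have "y - x \<notin> \<int>"
      proof
        assume "y - x \<in> \<int>"
        then obtain k where k: "y - x = of_int k" by (auto elim: Ints_cases)
        have "\<bar>y - x\<bar> < 1" "y - x \<noteq> 0" using y by (auto simp: dist_real_def)
        with k show False by (cases "k = 0") auto
      qed
      then have "norm (f (x + (y - x)) - f x) \<le> Q * tabs (y - x) powr s"
        using holder_props(2)[OF f \<open>y - x \<notin> \<int>\<close>, of x] by (simp add: Q_def)
      also have "\<dots> \<le> Q * \<bar>y - x\<bar> powr s"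
        using Q0 s tabs_le_abs tabs_nonneg by (intro mult_left_mono powr_mono2) auto
      finally show "norm (f y - f x) \<le> Q * \<bar>y - x\<bar> powr s" by simp
    qed simp
    have "((\<lambda>y. \<bar>y - x\<bar> powr s) \<longlongrightarrow> 0) (at x)"
      by (rule tendsto_zero_powrI) (auto intro!: tendsto_eq_intros s)
    then have "((\<lambda>y. Q * \<bar>y - x\<bar> powr s) \<longlongrightarrow> 0) (at x)"
      using tendsto_mult_right_zero by blast
    then have "((\<lambda>y. f y - f x) \<longlongrightarrow> 0) (at x)"
      using Lim_null_comparison[OF ev] by blast
    then show ?thesis unfolding isCont_def by (rule LIM_zero_cancel)
  qed
  then show ?thesis by (simp add: continuous_at_imp_continuous_on)
qed

lemma fourier_integrable:
  assumes "continuous_on UNIV u"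
  shows "(\<lambda>x. exp (- \<i> * 2 * pi * of_real x * of_int \<xi>) * u x) integrable_on {0..1}"
proof -
  have "continuous_on {0..1} u" using continuous_on_subset[OF assms] by blast
  then show ?thesis by (intro integrable_continuous_interval continuous_intros)
qed

lemma fourier_bound:
  assumes "\<And>x. norm (u x) \<le> B" 
  shows "norm (fourier_coeff u \<xi>) \<le> B"
proof (cases "(\<lambda>x. exp (- \<i> * 2 * pi * of_real x * of_int \<xi>) * u x) integrable_on {0..1}")
  case True
  have B0: "0 \<le> B" using assms[of 0] norm_ge_zero order_trans by blast
  have hi: "((\<lambda>x. exp (- \<i> * 2 * pi * of_real x * of_int \<xi>) * u x) has_integral fourier_coeff u \<xi>) (cbox 0 1)"
    using integrable_integral[OF True] unfolding fourier_coeff_def cbox_interval .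
  have bnd: "\<And>x. x \<in> cbox 0 1 \<Longrightarrow> norm (exp (- \<i> * 2 * pi * of_real x * of_int \<xi>) * u x) \<le> B"
    using assms by (simp add: norm_mult)
  from has_integral_bound[OF B0 hi bnd] show ?thesis by simp
next
  case False
  then show ?thesis using order_trans[OF norm_ge_zero assms[of 0]]
    by (simp add: fourier_coeff_def not_integrable_integral)
qed

lemma t1: assumes s: "0 < s" and f: "f \<in> holder_space s" and g: "g \<in> holder_space s"
  shows "fourier_coeff (\<lambda>x. f x + g x) \<xi> = fourier_coeff f \<xi> + fourier_coeff g \<xi>"
proof -
  note If = fourier_integrable[OF holder_continuous[OF f s], of \<xi>]
  note Ig = fourier_integrable[OF holder_continuous[OF g s], of \<xi>]
  show ?thesis
    unfolding fourier_coeff_def using integral_add[OF If Ig] by (simp add: distrib_left)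
qed

lemma t2: assumes s: "0 < s" and f: "f \<in> holder_space s"
  shows "fourier_coeff (\<lambda>x. c * f x) \<xi> = c * fourier_coeff f \<xi>"
proof -
  note If = fourier_integrable[OF holder_continuous[OF f s], of \<xi>]
  have "integral {0..1} (\<lambda>x. c * (exp (- \<i> * 2 * pi * of_real x * of_int \<xi>) * f x))
      = c * integral {0..1} (\<lambda>x. exp (- \<i> * 2 * pi * of_real x * of_int \<xi>) * f x)"
    using has_integral_mult_right[OF integrable_integral[OF If], of c] by (rule integral_unique)
  then show ?thesis
    unfolding fourier_coeff_def by (simp add: mult.left_commute)
qed

lemma fourier_cont_functional:
  assumes s: "0 < s"
  shows "cont_functional s (\<lambda>u. fourier_coeff u \<xi>)"
proof -
  have 1: "\<forall>f\<in>holder_space s. \<forall>g\<in>holder_space s.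
      fourier_coeff (\<lambda>x. f x + g x) \<xi> = fourier_coeff f \<xi> + fourier_coeff g \<xi>"
    using t1[OF s] by blast
  have 2: "\<forall>f\<in>holder_space s. \<forall>c. fourier_coeff (\<lambda>x. c * f x) \<xi> = c * fourier_coeff f \<xi>"
    using t2[OF s] by blast
  have 3: "\<exists>C. \<forall>f\<in>holder_space s. norm (fourier_coeff f \<xi>) \<le> C * holder_norm s f"
  proof (intro exI[of _ 1] ballI)
    fix f assume f: "f \<in> holder_space s"
    show "norm (fourier_coeff f \<xi>) \<le> 1 * holder_norm s f"
      using fourier_bound[OF holder_props(6)[OF f]] by simp
  qed
  show ?thesis unfolding cont_functional_def by (intro conjI 1 2 3)
qed

lemma fourier_dual_norm:
  "0 \<le> dual_norm s (\<lambda>u. fourier_coeff u \<xi>) \<and> dual_norm s (\<lambda>u. fourier_coeff u \<xi>) \<le> 1"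
proof -
  let ?S = "{norm (fourier_coeff f \<xi>) | f. f \<in> holder_space s \<and> holder_norm s f \<le> 1}"
  have le: "q \<le> 1" if "q \<in> ?S" for q
  proof -
    from that obtain f where f: "q = norm (fourier_coeff f \<xi>)" "f \<in> holder_space s" "holder_norm s f \<le> 1"
      by auto
    have h: "\<And>x. norm (f x) \<le> 1" using order_trans[OF holder_props(6)[OF f(2)] f(3)] .
    show ?thesis using fourier_bound[OF h] f(1) by simp
  qed
  have bdd: "bdd_above ?S" by (rule bdd_aboveI[where M=1]) (rule le)
  have z: "(\<lambda>x. 0) \<in> holder_space s \<and> holder_norm s (\<lambda>x. 0) \<le> 1"
    using holder_basic[of "\<lambda>x. 0" 0 0 s] by (simp add: periodic1_def)
  then have "norm (fourier_coeff (\<lambda>x. 0) \<xi>) \<in> ?S" by blast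
  then have ne: "?S \<noteq> {}" by auto
  have "norm (fourier_coeff (\<lambda>x. 0) \<xi>) \<le> Sup ?S"
    by (rule cSup_upper[OF \<open>norm (fourier_coeff (\<lambda>x. 0) \<xi>) \<in> ?S\<close> bdd])
  then have "0 \<le> Sup ?S" by (rule order_trans[OF norm_ge_zero])
  moreover have "Sup ?S \<le> 1" by (rule cSup_least[OF ne le])
  ultimately show ?thesis by (simp add: dual_norm_def)
qed

lemma interp:
  fixes X P R w :: real
  assumes "0 \<le> X" "X \<le> P" "X \<le> R" "0 < w" "w < 1"
  shows "X \<le> P powr (1 - w) * R powr w"
proof (cases "X = 0")
  case True then show ?thesis by simp
next
  case False
  then have X: "0 < X" using assms by simp
  have "X = X powr (1 - w) * X powr w" using X by (simp flip: powr_add)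
  also have "\<dots> \<le> P powr (1 - w) * R powr w"
    using assms X by (intro mult_mono powr_mono2) auto
  finally show ?thesis .
qed

lemma japanese_ge1: "1 \<le> japanese \<xi>" by (simp add: japanese_def)

lemma japanese_ge_abs: "\<bar>real_of_int \<xi>\<bar> \<le> japanese \<xi>"
  unfolding japanese_def by (rule real_le_rsqrt) simp

lemma lipschitz_from_deriv:
  fixes f f' :: "real \<Rightarrow> complex"
  assumes d: "\<And>x. (f has_vector_derivative f' x) (at x)" and L: "\<And>x. norm (f' x) \<le> L"
  shows "norm (f y - f x) \<le> L * \<bar>y - x\<bar>"
proof -
  have main: "norm (f b - f a) \<le> L * (b - a)" if ab: "a < b" for a b
  proof -
    have cont: "continuous_on {a..b} f"
      using d by (meson continuous_at_imp_continuous_on has_vector_derivative_continuous)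
    have der: "(f has_derivative (\<lambda>t. t *\<^sub>R f' x)) (at x)" for x
      using d[of x] by (simp add: has_vector_derivative_def)
    obtain z where "norm (f b - f a) \<le> norm ((b - a) *\<^sub>R f' z)"
      using mvt_general[OF ab cont, of "\<lambda>x t. t *\<^sub>R f' x"] der by blast
    also have "\<dots> = (b - a) * norm (f' z)" using ab by simp
    also have "\<dots> \<le> (b - a) * L" using ab L by (intro mult_left_mono) auto
    finally show ?thesis by (simp add: mult.commute)
  qed
  consider "x < y" | "x = y" | "y < x" by linarith
  then show ?thesis
  proof cases
    case 1 then show ?thesis using main[OF 1] by simp
  next
    case 2 then show ?thesis by simp
  next
    case 3 then show ?thesis using main[OF 3] by (simp add: norm_minus_commute)
  qed
qed

lemma symbol_Y_bounds:
  assumes sym: "symbol_class m \<rho> \<delta> a" and w: "0 < w" "w < 1" and d: "\<delta> \<le> 1"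
  obtains M where "0 \<le> M"
    "\<And>\<xi>. periodic1 (\<lambda>x. exp (\<i> * 2 * pi * of_real x * of_int \<xi>) * a x \<xi>)"
    "\<And>\<xi> x. norm (exp (\<i> * 2 * pi * of_real x * of_int \<xi>) * a x \<xi>) \<le> M * japanese \<xi> powr (m + w)"
    "\<And>\<xi> x h. norm (exp (\<i> * 2 * pi * of_real (x + h) * of_int \<xi>) * a (x + h) \<xi>
        - exp (\<i> * 2 * pi * of_real x * of_int \<xi>) * a x \<xi>) \<le> M * japanese \<xi> powr (m + w) * tabs h powr w"
proof -
  define E where "E \<xi> x = exp (\<i> * 2 * pi * of_real x * of_int \<xi>)" for \<xi> :: int and x :: real
  define Y where "Y \<xi> x = E \<xi> x * a x \<xi>" for \<xi> x
  have perA: "\<And>\<xi>. periodic1 (\<lambda>x. a x \<xi>)" and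
    "\<exists>D :: nat \<Rightarrow> real \<Rightarrow> int \<Rightarrow> complex. D 0 = a \<and>
        (\<forall>k x \<xi>. ((\<lambda>t. D k t \<xi>) has_vector_derivative D (Suc k) x \<xi>) (at x)) \<and>
        (\<forall>\<beta>\<le>2. \<exists>C. \<forall>x \<xi>. norm (D \<beta> x \<xi>) \<le> C * japanese \<xi> powr (m + \<delta> * real \<beta>))"
    using sym by (auto simp: symbol_class_def)
  then obtain D :: "nat \<Rightarrow> real \<Rightarrow> int \<Rightarrow> complex" where D0: "D 0 = a"
    and Dd: "\<And>k x \<xi>. ((\<lambda>t. D k t \<xi>) has_vector_derivative D (Suc k) x \<xi>) (at x)"
    and Db: "\<And>\<beta>. \<beta> \<le> 2 \<Longrightarrow> \<exists>C. \<forall>x \<xi>. norm (D \<beta> x \<xi>) \<le> C * japanese \<xi> powr (m + \<delta> * real \<beta>)"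
    by blast
  obtain C0 where C0: "\<And>x \<xi>. norm (a x \<xi>) \<le> C0 * japanese \<xi> powr m"
    using Db[of 0] D0 by auto
  obtain C1 where C1: "\<And>x \<xi>. norm (D 1 x \<xi>) \<le> C1 * japanese \<xi> powr (m + \<delta>)"
    using Db[of 1] by auto
  have jp: "0 < japanese \<xi> powr t" for \<xi> t using japanese_ge1[of \<xi>] by simp
  have C00: "0 \<le> C0" using C0[of 0 0] jp[of 0 m]
    by (meson norm_ge_zero order_trans zero_le_mult_iff not_le)
  have C10: "0 \<le> C1" using C1[of 0 0] jp[of 0 "m + \<delta>"]
    by (meson norm_ge_zero order_trans zero_le_mult_iff not_le)
  have normE: "norm (E \<xi> x) = 1" for \<xi> x by (simp add: E_def)
  have Ebnd: "norm (Y \<xi> x) \<le> C0 * japanese \<xi> powr m" for \<xi> x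
    using C0 by (simp add: Y_def norm_mult normE)
  define L where "L = 2 * pi * C0 + C1"
  have L0: "0 \<le> L" using C00 C10 by (simp add: L_def)
  have Yder: "((\<lambda>t. Y \<xi> t) has_vector_derivative
      (\<i> * 2 * pi * of_int \<xi> * E \<xi> x * a x \<xi> + E \<xi> x * D 1 x \<xi>)) (at x)" for \<xi> x
  proof -
    have a1: "((\<lambda>t. a t \<xi>) has_vector_derivative D 1 x \<xi>) (at x)"
      using Dd[where k=0 and x=x and \<xi>=\<xi>] D0 by simp
    define A where "A = \<i> * 2 * pi * of_int \<xi>"
    have e0: "((\<lambda>t. exp (t *\<^sub>R A)) has_vector_derivative A * exp (x *\<^sub>R A)) (at x)"
      by (rule exp_scaleR_has_vector_derivative_left)
    have eq: "exp (t *\<^sub>R A) = E \<xi> t" for t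
      by (simp add: E_def A_def scaleR_conv_of_real algebra_simps)
    have e1: "((\<lambda>t. E \<xi> t) has_vector_derivative (\<i> * 2 * pi * of_int \<xi> * E \<xi> x)) (at x)"
      using e0 unfolding eq A_def[symmetric] .
    show ?thesis unfolding Y_def
      using has_vector_derivative_mult[OF e1 a1] by (simp add: algebra_simps)
  qed
  have Yderb: "norm (\<i> * 2 * pi * of_int \<xi> * E \<xi> x * a x \<xi> + E \<xi> x * D 1 x \<xi>)
      \<le> L * japanese \<xi> powr (m + 1)" for \<xi> x
  proof -
    let ?J = "japanese \<xi>"
    have J1: "1 \<le> ?J" by (rule japanese_ge1)
    have "norm (\<i> * 2 * pi * of_int \<xi> * E \<xi> x * a x \<xi>) = 2 * pi * \<bar>real_of_int \<xi>\<bar> * norm (a x \<xi>)"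
      by (simp add: norm_mult normE)
    also have "\<dots> \<le> 2 * pi * ?J * (C0 * ?J powr m)"
      using japanese_ge_abs[of \<xi>] C0[of x \<xi>] by (intro mult_mono mult_left_mono) auto
    also have "\<dots> = 2 * pi * C0 * ?J powr (m + 1)"
      using J1 by (simp add: powr_add)
    finally have t1: "norm (\<i> * 2 * pi * of_int \<xi> * E \<xi> x * a x \<xi>) \<le> 2 * pi * C0 * ?J powr (m + 1)" .
    have "norm (E \<xi> x * D 1 x \<xi>) \<le> C1 * ?J powr (m + \<delta>)" using C1 by (simp add: norm_mult normE)
    also have "\<dots> \<le> C1 * ?J powr (m + 1)"
      using J1 d C10 by (intro mult_left_mono powr_mono) auto
    finally have t2: "norm (E \<xi> x * D 1 x \<xi>) \<le> C1 * ?J powr (m + 1)" .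
    show ?thesis using norm_triangle_le[OF add_mono[OF t1 t2]] by (simp add: L_def algebra_simps)
  qed
  have lip: "norm (Y \<xi> y - Y \<xi> x) \<le> L * japanese \<xi> powr (m + 1) * \<bar>y - x\<bar>" for \<xi> x y
    by (rule lipschitz_from_deriv[OF Yder Yderb])
  have perY: "periodic1 (Y \<xi>)" for \<xi>
  proof -
    have "E \<xi> (x + 1) = E \<xi> x" for x
    proof -
      have "E \<xi> (x + 1) = exp (\<i> * 2 * pi * of_real x * of_int \<xi> + 2 * of_int \<xi> * pi * \<i>)"
        unfolding E_def by (rule arg_cong[where f=exp]) (simp add: algebra_simps)
      also have "\<dots> = E \<xi> x * exp (2 * of_int \<xi> * pi * \<i>)"
        unfolding E_def by (rule exp_add)
      also have "exp (2 * of_int \<xi> * pi * \<i>) = 1" by (rule exp_integer_2pi) simp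
      finally show ?thesis by simp
    qed
    then show ?thesis using perA[of \<xi>] by (simp add: periodic1_def Y_def)
  qed
  define K where "K = (2 * C0) powr (1 - w) * L powr w"
  have K0: "0 \<le> K" by (simp add: K_def)
  have hold: "norm (Y \<xi> (x + h) - Y \<xi> x) \<le> K * japanese \<xi> powr (m + w) * tabs h powr w" for \<xi> x h
  proof -
    let ?J = "japanese \<xi>"
    have J1: "1 \<le> ?J" by (rule japanese_ge1)
    obtain h' where h': "\<bar>h'\<bar> = tabs h" "\<And>x. Y \<xi> (x + h) = Y \<xi> (x + h')"
      using periodic1_tabs[OF perY] by blast
    let ?X = "norm (Y \<xi> (x + h) - Y \<xi> x)"
    have b1: "?X \<le> 2 * C0 * ?J powr m"
      using norm_triangle_ineq4[of "Y \<xi> (x + h)" "Y \<xi> x"] Ebnd[of \<xi> "x+h"] Ebnd[of \<xi> x] by simp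
    have b2: "?X \<le> L * ?J powr (m + 1) * tabs h"
      using lip[of \<xi> "x + h'" x] h' by simp
    have "?X \<le> (2 * C0 * ?J powr m) powr (1 - w) * (L * ?J powr (m + 1) * tabs h) powr w"
      by (rule interp[OF norm_ge_zero b1 b2 w])
    also have "\<dots> = (2 * C0) powr (1 - w) * L powr w * (?J powr (m * (1 - w)) * ?J powr ((m + 1) * w)) * tabs h powr w"
      using C00 L0 tabs_nonneg[of h] J1
      by (simp add: powr_mult powr_powr mult_nonneg_nonneg)
    also have "?J powr (m * (1 - w)) * ?J powr ((m + 1) * w) = ?J powr (m + w)"
      by (simp add: algebra_simps flip: powr_add)
    finally show ?thesis by (simp add: K_def mult.assoc)
  qed
  show ?thesis
  proof
    show "0 \<le> K + C0" using K0 C00 by simp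
    show "periodic1 (\<lambda>x. exp (\<i> * 2 * pi * of_real x * of_int \<xi>) * a x \<xi>)" for \<xi>
      using perY[of \<xi>] unfolding Y_def[abs_def] E_def[abs_def] by simp
    show "norm (exp (\<i> * 2 * pi * of_real x * of_int \<xi>) * a x \<xi>) \<le> (K + C0) * japanese \<xi> powr (m + w)" for \<xi> x
    proof -
      have "norm (Y \<xi> x) \<le> C0 * japanese \<xi> powr m" by (rule Ebnd)
      also have "\<dots> \<le> C0 * japanese \<xi> powr (m + w)"
        using japanese_ge1[of \<xi>] w C00 by (intro mult_left_mono powr_mono) auto
      also have "\<dots> \<le> (K + C0) * japanese \<xi> powr (m + w)"
        using K0 jp by (intro mult_right_mono) (auto simp: less_imp_le)
      finally show ?thesis by (simp add: Y_def E_def)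
    qed
    show "norm (exp (\<i> * 2 * pi * of_real (x + h) * of_int \<xi>) * a (x + h) \<xi>
        - exp (\<i> * 2 * pi * of_real x * of_int \<xi>) * a x \<xi>) \<le> (K + C0) * japanese \<xi> powr (m + w) * tabs h powr w" for \<xi> x h
    proof -
      have "norm (Y \<xi> (x + h) - Y \<xi> x) \<le> K * japanese \<xi> powr (m + w) * tabs h powr w" by (rule hold)
      also have "\<dots> \<le> (K + C0) * japanese \<xi> powr (m + w) * tabs h powr w"
        using C00 jp[of \<xi> "m+w"] tabs_nonneg[of h] by (intro mult_right_mono) (auto simp: less_imp_le)
      finally show ?thesis by (simp add: Y_def E_def)
    qed
  qed
qed

lemma series_holder:
  fixes c :: "nat \<Rightarrow> complex" and f :: "nat \<Rightarrow> real \<Rightarrow> complex" and b :: "nat \<Rightarrow> real"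
  assumes per: "\<And>n. periodic1 (f n)" and cb: "\<And>n. norm (c n) \<le> U"
    and fb: "\<And>n x. norm (f n x) \<le> b n"
    and fh: "\<And>n x h. norm (f n (x + h) - f n x) \<le> b n * tabs h powr w"
    and sb: "summable b"
  shows "(\<lambda>x. \<Sum>n. c n * f n x) \<in> holder_space w"
    "holder_norm w (\<lambda>x. \<Sum>n. c n * f n x) \<le> 2 * (U * suminf b)"
proof -
  have U0: "0 \<le> U" using order_trans[OF norm_ge_zero cb[of 0]] .
  have b0: "0 \<le> b n" for n using order_trans[OF norm_ge_zero fb[of n 0]] .
  have sUb: "summable (\<lambda>n. U * b n)" using sb by (rule summable_mult)
  have tb: "norm (c n * f n x) \<le> U * b n" for n x
    unfolding norm_mult using cb[of n] fb[of n x] U0 by (intro mult_mono) auto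
  have sn: "summable (\<lambda>n. norm (c n * f n x))" for x
  proof (rule summable_comparison_test'[OF sUb, where N=0])
    fix n :: nat show "norm (norm (c n * f n x)) \<le> U * b n" using tb[of n x] by (simp only: real_norm_def abs_norm_cancel)
  qed
  have s: "summable (\<lambda>n. c n * f n x)" for x
    using sn[of x] by (rule summable_norm_cancel)
  have A: "norm (\<Sum>n. c n * f n x) \<le> U * suminf b" for x
  proof -
    have "norm (\<Sum>n. c n * f n x) \<le> (\<Sum>n. norm (c n * f n x))" by (rule summable_norm[OF sn])
    also have "\<dots> \<le> (\<Sum>n. U * b n)" by (rule suminf_le[OF tb sn sUb])
    also have "\<dots> = U * suminf b" by (rule suminf_mult[OF sb])
    finally show ?thesis .
  qed
  have B: "norm ((\<Sum>n. c n * f n (x + h)) - (\<Sum>n. c n * f n x)) \<le> U * suminf b * tabs h powr w" for x h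
  proof -
    have tb2: "norm (c n * (f n (x + h) - f n x)) \<le> U * b n * tabs h powr w" for n
    proof -
      have "norm (c n) * norm (f n (x + h) - f n x) \<le> U * (b n * tabs h powr w)"
        using cb[of n] fh[of n x h] U0 by (intro mult_mono) auto
      then show ?thesis by (simp add: norm_mult mult.assoc)
    qed
    have sUb2: "summable (\<lambda>n. U * b n * tabs h powr w)" using sUb by (rule summable_mult2)
    have sn2: "summable (\<lambda>n. norm (c n * (f n (x + h) - f n x)))"
    proof (rule summable_comparison_test'[OF sUb2, where N=0])
      fix n :: nat show "norm (norm (c n * (f n (x + h) - f n x))) \<le> U * b n * tabs h powr w"
        using tb2[of n] by (simp only: real_norm_def abs_norm_cancel)
    qed
    have eq: "(\<Sum>n. c n * f n (x + h)) - (\<Sum>n. c n * f n x) = (\<Sum>n. c n * (f n (x + h) - f n x))"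
      using suminf_diff[OF s[of "x + h"] s[of x]] by (simp add: right_diff_distrib)
    have "norm ((\<Sum>n. c n * f n (x + h)) - (\<Sum>n. c n * f n x)) \<le> (\<Sum>n. norm (c n * (f n (x + h) - f n x)))"
      unfolding eq by (rule summable_norm[OF sn2])
    also have "\<dots> \<le> (\<Sum>n. U * b n * tabs h powr w)" by (rule suminf_le[OF tb2 sn2 sUb2])
    also have "\<dots> = (\<Sum>n. U * b n) * tabs h powr w" by (rule suminf_mult2[OF sUb, symmetric])
    also have "\<dots> = U * suminf b * tabs h powr w" by (simp only: suminf_mult[OF sb])
    finally show ?thesis .
  qed
  have P: "periodic1 (\<lambda>x. \<Sum>n. c n * f n x)"
    using per by (simp add: periodic1_def)
  show "(\<lambda>x. \<Sum>n. c n * f n x) \<in> holder_space w" by (rule holder_basic(1)[OF P A B])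
  have "holder_norm w (\<lambda>x. \<Sum>n. c n * f n x) \<le> U * suminf b + U * suminf b"
    by (rule holder_basic(2)[OF P A B])
  then show "holder_norm w (\<lambda>x. \<Sum>n. c n * f n x) \<le> 2 * (U * suminf b)" by simp
qed

lemma bij_int_decode': "bij_betw int_decode UNIV UNIV"
  using inj_int_decode surj_int_decode by (simp add: bij_betw_def)

lemma infsum_int_nat:
  fixes \<phi> :: "int \<Rightarrow> complex"
  assumes "summable (\<lambda>n. norm (\<phi> (int_decode n)))"
  shows "infsum \<phi> UNIV = (\<Sum>n. \<phi> (int_decode n))"
proof -
  have su: "(\<lambda>n. \<phi> (int_decode n)) summable_on UNIV"
    by (rule norm_summable_imp_summable_on[OF assms])
  have "(\<lambda>n. \<phi> (int_decode n)) sums infsum (\<lambda>n. \<phi> (int_decode n)) UNIV"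
    by (rule has_sum_imp_sums[OF has_sum_infsum[OF su]])
  then have "(\<Sum>n. \<phi> (int_decode n)) = infsum (\<lambda>n. \<phi> (int_decode n)) UNIV"
    by (simp add: sums_iff)
  also have "\<dots> = infsum \<phi> UNIV" by (rule infsum_reindex_bij_betw[OF bij_int_decode'])
  finally show ?thesis by simp
qed

lemma tail_to_zero:
  fixes b :: "nat \<Rightarrow> real"
  assumes "summable b"
  shows "(\<lambda>N. \<Sum>k. b (k + N)) \<longlonglongrightarrow> 0"
proof -
  have "(\<lambda>N. suminf b - (\<Sum>i<N. b i)) \<longlonglongrightarrow> suminf b - suminf b"
    by (intro tendsto_diff tendsto_const summable_LIMSEQ[OF assms])
  moreover have "(\<Sum>k. b (k + N)) = suminf b - (\<Sum>i<N. b i)" for N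
    using suminf_split_initial_segment[OF assms, of N] by simp
  ultimately show ?thesis by simp
qed

lemma int_decode_bound: "real n \<le> 2 * \<bar>real_of_int (int_decode n)\<bar> + 1"
proof -
  have e: "int_decode n = (if even n then int (n div 2) else - int (n div 2) - 1)"
    by (simp add: int_decode_def sum_decode_def)
  have d: "n \<le> 2 * (n div 2) + 1" by presburger
  have "int n \<le> 2 * \<bar>int_decode n\<bar> + 1"
  proof (cases "even n")
    case True then show ?thesis using d e by simp
  next
    case False then show ?thesis using d e by simp
  qed
  then show ?thesis by linarith
qed

lemma japanese_decode_bound: "(real n + 1) / 4 \<le> japanese (int_decode n)"
proof -
  let ?J = "japanese (int_decode n)"
  have "1 \<le> ?J" by (simp add: japanese_def)
  moreover have "\<bar>real_of_int (int_decode n)\<bar> \<le> ?J"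
    unfolding japanese_def by (rule real_le_rsqrt) simp
  ultimately have "real n + 1 \<le> 4 * ?J" using int_decode_bound[of n] by linarith
  then show ?thesis by simp
qed

lemma summable_japanese_decode:
  assumes "q < -1"
  shows "summable (\<lambda>n. japanese (int_decode n) powr q)"
proof -
  have s1: "summable (\<lambda>n. real (Suc n) powr q)"
    using summable_real_powr_iff[of q] assms summable_Suc_iff[of "\<lambda>n. real n powr q"] by simp
  have s2: "summable (\<lambda>n. 4 powr (- q) * real (Suc n) powr q)"
    by (rule summable_mult[OF s1])
  show ?thesis
  proof (rule summable_comparison_test'[OF s2])
    fix n :: nat
    have "japanese (int_decode n) powr q \<le> ((real n + 1) / 4) powr q"
      using assms japanese_decode_bound[of n] by (intro powr_mono2') auto
    also have "\<dots> = real (Suc n) powr q / 4 powr q"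
      by (subst powr_divide) (auto simp: add.commute)
    also have "\<dots> = 4 powr (- q) * real (Suc n) powr q"
      by (simp only: powr_minus divide_inverse mult.commute)
    finally show "norm (japanese (int_decode n) powr q) \<le> 4 powr (- q) * real (Suc n) powr q"
      by simp
  qed
qed

theorem corollary3p7:
  fixes r s w \<rho> \<delta> m :: real and a :: "real \<Rightarrow> int \<Rightarrow> complex"
  assumes "0 < r" "r \<le> 1" "0 < s" "s < 1" "0 < w" "w < 1"
    and "0 \<le> \<rho>" "\<rho> \<le> 1" "0 \<le> \<delta>" "\<delta> \<le> 1"
    and "symbol_class m \<rho> \<delta> a"
    and "m < - 1 / r - w - 2 * \<delta>"
  shows "r_nuclear r s w (pseudo_op a)"
proof -
  have r0: "0 < r" and r1: "r \<le> 1" and s0: "0 < s" and w0: "0 < w" and w1: "w < 1"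
    and d0: "0 \<le> \<delta>" and d1: "\<delta> \<le> 1" and mlt: "m < - 1 / r - w - 2 * \<delta>"
    using assms by auto
  obtain M where M0: "0 \<le> M"
    and perY0: "\<And>\<xi>. periodic1 (\<lambda>x. exp (\<i> * 2 * pi * of_real x * of_int \<xi>) * a x \<xi>)"
    and Yb0: "\<And>\<xi> x. norm (exp (\<i> * 2 * pi * of_real x * of_int \<xi>) * a x \<xi>) \<le> M * japanese \<xi> powr (m + w)"
    and Yh0: "\<And>\<xi> x h. norm (exp (\<i> * 2 * pi * of_real (x + h) * of_int \<xi>) * a (x + h) \<xi>
        - exp (\<i> * 2 * pi * of_real x * of_int \<xi>) * a x \<xi>) \<le> M * japanese \<xi> powr (m + w) * tabs h powr w"
    using symbol_Y_bounds[OF assms(11) w0 w1 d1] by blast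
  define g where "g = int_decode"
  define Y where "Y = (\<lambda>\<xi> x. exp (\<i> * 2 * pi * of_real x * of_int \<xi>) * a x \<xi>)"
  define bb where "bb = (\<lambda>n. M * japanese (g n) powr (m + w))"
  have inv: "1 \<le> 1 / r" using r0 r1 by (simp add: field_simps)
  have mw': "m + w < - 1 / r" using mlt d0 by linarith
  have mw: "m + w < -1" using mw' inv by linarith
  have mwr: "(m + w) * r < -1"
  proof -
    have "(m + w) * r < (- 1 / r) * r" using mw' r0 by (rule mult_strict_right_mono)
    then show ?thesis using r0 by simp
  qed
  have sbb: "summable bb"
    unfolding bb_def g_def by (rule summable_mult[OF summable_japanese_decode[OF mw]])
  have jp: "0 < japanese \<xi> powr t" for \<xi> t using japanese_ge1[of \<xi>] by simp
  have bb0: "0 \<le> bb n" for n unfolding bb_def using M0 jp by (simp add: less_imp_le)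
  have perY: "periodic1 (Y \<xi>)" for \<xi> unfolding Y_def using perY0[of \<xi>] by simp
  have Yb: "norm (Y (g n) x) \<le> bb n" for n x unfolding Y_def bb_def using Yb0 by simp
  have Yh: "norm (Y (g n) (x + h) - Y (g n) x) \<le> bb n * tabs h powr w" for n x h
    unfolding Y_def bb_def using Yh0 by simp
  have yH: "Y (g n) \<in> holder_space w" for n by (rule holder_basic(1)[OF perY Yb Yh])
  have yN: "holder_norm w (Y (g n)) \<le> bb n + bb n" for n by (rule holder_basic(2)[OF perY Yb Yh])

  define e where "e = (\<lambda>n u. fourier_coeff u (g n))"
  have eC: "cont_functional s (e n)" for n
    unfolding e_def by (rule fourier_cont_functional[OF s0])
  have eN: "0 \<le> dual_norm s (e n) \<and> dual_norm s (e n) \<le> 1" for n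
    unfolding e_def by (rule fourier_dual_norm)

  have summ: "summable (\<lambda>n. (dual_norm s (e n)) powr r * (holder_norm w (Y (g n))) powr r)"
  proof (rule summable_comparison_test'[where N=0])
    show "summable (\<lambda>n. (2 * M) powr r * japanese (g n) powr ((m + w) * r))"
      unfolding g_def by (rule summable_mult[OF summable_japanese_decode[OF mwr]])
    fix n :: nat
    let ?d = "dual_norm s (e n)" and ?h = "holder_norm w (Y (g n))"
    have h0: "0 \<le> ?h" by (rule holder_props(5)[OF yH])
    have t1: "?d powr r \<le> 1"
      using powr_mono2[of r ?d 1] eN[of n] r0 by simp
    have "?h powr r \<le> (2 * bb n) powr r"
      using powr_mono2[of r ?h "2 * bb n"] yN[of n] h0 r0 by simp
    also have "(2 * bb n) powr r = (2 * M) powr r * japanese (g n) powr ((m + w) * r)"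
      unfolding bb_def using M0 jp[of "g n" "m + w"]
      by (simp add: powr_mult powr_powr mult.assoc less_imp_le)
    finally have t2: "?h powr r \<le> (2 * M) powr r * japanese (g n) powr ((m + w) * r)" .
    have "?d powr r * ?h powr r \<le> 1 * ((2 * M) powr r * japanese (g n) powr ((m + w) * r))"
      by (rule mult_mono[OF t1 t2]) auto
    then show "norm (?d powr r * ?h powr r) \<le> (2 * M) powr r * japanese (g n) powr ((m + w) * r)"
      by simp
  qed

  have main: "pseudo_op a u \<in> holder_space w \<and>
      (\<lambda>N. holder_norm w (\<lambda>x. pseudo_op a u x - (\<Sum>n<N. e n u * Y (g n) x))) \<longlonglongrightarrow> 0"
    if u: "u \<in> holder_space s" for u
  proof -
    define U where "U = holder_norm s u"
    define c where "c = (\<lambda>n. fourier_coeff u (g n))"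
    have U0: "0 \<le> U" unfolding U_def by (rule holder_props(5)[OF u])
    have cb: "norm (c n) \<le> U" for n
      unfolding c_def U_def by (rule fourier_bound[OF holder_props(6)[OF u]])
    have tb: "norm (c n * Y (g n) x) \<le> U * bb n" for n x
      unfolding norm_mult using cb[of n] Yb[of n x] U0 by (intro mult_mono) auto
    have sUb: "summable (\<lambda>n. U * bb n)" by (rule summable_mult[OF sbb])
    have sn: "summable (\<lambda>n. norm (c n * Y (g n) x))" for x
    proof (rule summable_comparison_test'[OF sUb, where N=0])
    fix n :: nat show "norm (norm (c n * Y (g n) x)) \<le> U * bb n" using tb[of n x] by (simp only: real_norm_def abs_norm_cancel)
  qed
    have sx: "summable (\<lambda>n. c n * Y (g n) x)" for x
      using sn[of x] by (rule summable_norm_cancel)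
    have T: "pseudo_op a u = (\<lambda>x. \<Sum>n. c n * Y (g n) x)"
    proof
      fix x
      have eqt: "exp (\<i> * 2 * pi * of_real x * of_int (int_decode n)) * a x (int_decode n) * fourier_coeff u (int_decode n)
          = c n * Y (g n) x" for n
        by (simp add: c_def Y_def g_def)
      have "pseudo_op a u x = (\<Sum>n. exp (\<i> * 2 * pi * of_real x * of_int (int_decode n)) * a x (int_decode n) * fourier_coeff u (int_decode n))"
        unfolding pseudo_op_def
        by (rule infsum_int_nat) (use sn[of x] in \<open>simp only: eqt\<close>)
      then show "pseudo_op a u x = (\<Sum>n. c n * Y (g n) x)" by (simp only: eqt)
    qed
    have H: "pseudo_op a u \<in> holder_space w"
      unfolding T by (rule series_holder(1)[OF perY cb Yb Yh sbb])
    have tail: "(\<lambda>x. pseudo_op a u x - (\<Sum>n<N. e n u * Y (g n) x)) = (\<lambda>x. \<Sum>k. c (k + N) * Y (g (k + N)) x)" for N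
    proof
      fix x
      show "pseudo_op a u x - (\<Sum>n<N. e n u * Y (g n) x) = (\<Sum>k. c (k + N) * Y (g (k + N)) x)"
        unfolding T using suminf_split_initial_segment[OF sx[of x], of N]
        by (simp add: e_def c_def)
    qed
    have tH: "(\<lambda>x. \<Sum>k. c (k + N) * Y (g (k + N)) x) \<in> holder_space w" for N
      by (rule series_holder(1)[OF perY cb Yb Yh summable_ignore_initial_segment[OF sbb]])
    have tN: "holder_norm w (\<lambda>x. \<Sum>k. c (k + N) * Y (g (k + N)) x) \<le> 2 * (U * (\<Sum>k. bb (k + N)))" for N
      by (rule series_holder(2)[OF perY cb Yb Yh summable_ignore_initial_segment[OF sbb]])
    have lim0: "(\<lambda>N. 2 * (U * (\<Sum>k. bb (k + N)))) \<longlonglongrightarrow> 2 * (U * 0)"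
      by (intro tendsto_mult tendsto_const tail_to_zero[OF sbb])
    then have lim: "(\<lambda>N. 2 * (U * (\<Sum>k. bb (k + N)))) \<longlonglongrightarrow> 0"
      by (simp only: mult_zero_right)
    have ev1: "\<forall>\<^sub>F N in sequentially. 0 \<le> holder_norm w (\<lambda>x. \<Sum>k. c (k + N) * Y (g (k + N)) x)"
      by (rule always_eventually) (use holder_props(5)[OF tH] in blast)
    have ev2: "\<forall>\<^sub>F N in sequentially. holder_norm w (\<lambda>x. \<Sum>k. c (k + N) * Y (g (k + N)) x) \<le> 2 * (U * (\<Sum>k. bb (k + N)))"
      by (rule always_eventually) (use tN in blast)
    have "(\<lambda>N. holder_norm w (\<lambda>x. \<Sum>k. c (k + N) * Y (g (k + N)) x)) \<longlonglongrightarrow> 0"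
      by (rule tendsto_sandwich[OF ev1 ev2 tendsto_const lim])
    then show ?thesis using H by (simp add: tail)
  qed

  show ?thesis
    unfolding r_nuclear_def
  proof (intro conjI ballI exI[of _ e] exI[of _ "\<lambda>n. Y (g n)"] allI)
    show "pseudo_op a u \<in> holder_space w" if "u \<in> holder_space s" for u using main[OF that] by blast
    show "cont_functional s (e n)" for n by (rule eC)
    show "Y (g n) \<in> holder_space w" for n by (rule yH)
    show "summable (\<lambda>n. dual_norm s (e n) powr r * holder_norm w (Y (g n)) powr r)" by (rule summ)
    show "(\<lambda>N. holder_norm w (\<lambda>x. pseudo_op a u x - (\<Sum>n<N. e n u * Y (g n) x))) \<longlonglongrightarrow> 0"
      if "u \<in> holder_space s" for u using main[OF that] by blast
  qed
qed

end
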